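(* Let $s\ge2$ be an integer and $\varPhi$ the family of (interiors of) $s$-adic cylinders $\bigl(\frac{m}{s^n},\frac{m+1}{s^n}\bigr)$, $n\ge1$, $0\le m<s^n$. Then $\varPhi$ is faithful for packing dimension calculation: $\dim_P(E,\varPhi)=\dim_{P(\mathit{unc})}(E)$ for every $E\subset[0,1]$.
   Context: In $\mathbb R$: an uncentered $\varepsilon$-packing of $E$ is a countable family of pairwise disjoint open intervals of length $\le\varepsilon$ each meeting $E$; $\mathcal P^\alpha_{\varepsilon(\mathit{unc})}(E)=\sup\sum|E_i|^\alpha$, $\mathcal P^\alpha_{0(\mathit{unc})}=\lim_{\varepsilon\to0}$, $\mathcal P^\alpha_{(\mathit{unc})}(E)=\inf\{\sum_j\mathcal P^\alpha_{0(\mathit{unc})}(E_j):E\subset\bigcup E_j\}$, $\dim_{P(\mathit{unc})}(E)=\inf\{\alpha:\mathcal P^\alpha_{(\mathit{unc})}(E)=0\}$; $\dim_P(E,\varPhi)$ is the same using only packings by intervals from $\varPhi$. *)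

theory Defs
  imports "HOL-Analysis.Analysis"
begin

text \<open>Open intervals are represented by their endpoint pairs (a,b), meaning the
  interval a < x < b.  A family of admissible intervals is a set of such pairs.\<close>

definition is_packing :: "(real \<times> real) set \<Rightarrow> real \<Rightarrow> real set \<Rightarrow> (real \<times> real) set \<Rightarrow> bool" where
  "is_packing Phi eps E F \<longleftrightarrow>
     countable F \<and> F \<subseteq> Phi \<and>
     (\<forall>(a,b)\<in>F. a < b \<and> b - a \<le> eps \<and> {a<..<b} \<inter> E \<noteq> {}) \<and>
     (\<forall>p\<in>F. \<forall>q\<in>F. p \<noteq> q \<longrightarrow> {fst p<..<snd p} \<inter> {fst q<..<snd q} = {})"

definition pack_eps :: "(real \<times> real) set \<Rightarrow> real \<Rightarrow> real \<Rightarrow> real set \<Rightarrow> ennreal" where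
  "pack_eps Phi \<alpha> eps E =
     (SUP F \<in> {F. is_packing Phi eps E F}. \<Sum>\<^sub>\<infinity> p\<in>F. ennreal ((snd p - fst p) powr \<alpha>))"

text \<open>pack_eps is monotone in eps, so the limit eps -> 0 equals the infimum over eps > 0.\<close>
definition pack_zero :: "(real \<times> real) set \<Rightarrow> real \<Rightarrow> real set \<Rightarrow> ennreal" where
  "pack_zero Phi \<alpha> E = (INF eps \<in> {0<..}. pack_eps Phi \<alpha> eps E)"

definition pack_measure :: "(real \<times> real) set \<Rightarrow> real \<Rightarrow> real set \<Rightarrow> ennreal" where
  "pack_measure Phi \<alpha> E =
     (INF C \<in> {C :: nat \<Rightarrow> real set. E \<subseteq> (\<Union>j. C j)}. \<Sum>j. pack_zero Phi \<alpha> (C j))"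

definition pack_dim :: "(real \<times> real) set \<Rightarrow> real set \<Rightarrow> real" where
  "pack_dim Phi E = Inf {\<alpha>. 0 \<le> \<alpha> \<and> pack_measure Phi \<alpha> E = 0}"

definition unc_intervals :: "(real \<times> real) set" where
  "unc_intervals = {(a,b). a < b}"

definition dim_P_unc :: "real set \<Rightarrow> real" where
  "dim_P_unc E = pack_dim unc_intervals E"

definition s_adic_cylinders :: "nat \<Rightarrow> (real \<times> real) set" where
  "s_adic_cylinders s =
     {(real m / real s ^ n, (real m + 1) / real s ^ n) | n m. 1 \<le> n \<and> m < s ^ n}"

end

theory Submission
  imports Defs
begin


definition Qs :: "nat \<Rightarrow> real set" where
  "Qs s = (\<lambda>(m,n). real m / real s ^ n) ` UNIV"

definition Nset :: "nat \<Rightarrow> real set \<Rightarrow> nat \<Rightarrow> nat set" where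
  "Nset s C n = {m. m < s ^ n \<and> {real m / real s ^ n <..< (real m + 1) / real s ^ n} \<inter> C \<noteq> {}}"

lemma countable_Qs: "countable (Qs s)"
  unfolding Qs_def by simp

lemma Qs_I: "real m / real s ^ n \<in> Qs s"
  unfolding Qs_def by (auto intro!: image_eqI[where x="(m,n)"])

lemma finite_Nset: "finite (Nset s C n)"
  unfolding Nset_def by auto

lemma card_Nset: "card (Nset s C n) \<le> s ^ n"
proof -
  have "Nset s C n \<subseteq> {..<s^n}" unfolding Nset_def by auto
  then show ?thesis using card_mono[of "{..<s^n}"] by fastforce
qed

lemma cyl:
  fixes n :: nat
  assumes s: "2 \<le> s" and x: "0 < x" "x < 1" "x \<notin> Qs s"
  defines "m \<equiv> nat \<lfloor>x * real s ^ n\<rfloor>"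
  shows "m < s ^ n" "real m / real s ^ n < x" "x < (real m + 1) / real s ^ n"
proof -
  have sp: "real s ^ n > 0" using s by simp
  have fl: "of_int \<lfloor>x * real s ^ n\<rfloor> = real m" using x sp unfolding m_def by simp
  have ne: "x * real s ^ n \<noteq> real m"
  proof
    assume "x * real s ^ n = real m"
    then have "x = real m / real s ^ n" using sp by (simp add: field_simps)
    then show False using x(3) Qs_I by metis
  qed
  have le: "real m \<le> x * real s ^ n" using fl of_int_floor_le by metis
  have lt1: "real m < x * real s ^ n" using le ne by simp
  have lt2: "x * real s ^ n < real m + 1" using fl real_of_int_floor_add_one_gt by metis
  show "real m / real s ^ n < x" using lt1 sp by (simp add: field_simps)
  show "x < (real m + 1) / real s ^ n" using lt2 sp by (simp add: field_simps)
  have "x * real s ^ n < real s ^ n" using x sp by simp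
  then have "real m < real s ^ n" using le by linarith
  then show "m < s ^ n" by (metis of_nat_less_imp_less of_nat_power)
qed

lemma packing_mono: "is_packing Phi eps E F \<Longrightarrow> Phi \<subseteq> Psi \<Longrightarrow> is_packing Psi eps E F"
  unfolding is_packing_def by blast

lemma packing_set_mono: "is_packing Phi eps E F \<Longrightarrow> E \<subseteq> E' \<Longrightarrow> is_packing Phi eps E' F"
  unfolding is_packing_def by (smt (verit, best) case_prodI2 disjoint_iff in_mono prod.case_eq_if)

lemma pack_eps_mono: "Phi \<subseteq> Psi \<Longrightarrow> E \<subseteq> E' \<Longrightarrow> pack_eps Phi \<alpha> eps E \<le> pack_eps Psi \<alpha> eps E'"
  unfolding pack_eps_def
  by (rule SUP_subset_mono) (auto intro: packing_mono packing_set_mono)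

lemma pack_zero_mono: "Phi \<subseteq> Psi \<Longrightarrow> E \<subseteq> E' \<Longrightarrow> pack_zero Phi \<alpha> E \<le> pack_zero Psi \<alpha> E'"
  unfolding pack_zero_def by (rule INF_mono) (auto intro: pack_eps_mono)

lemma pack_measure_mono: "Phi \<subseteq> Psi \<Longrightarrow> pack_measure Phi \<alpha> E \<le> pack_measure Psi \<alpha> E"
  unfolding pack_measure_def
proof (rule INF_mono)
  fix C :: "nat \<Rightarrow> real set" assume "C \<in> {C. E \<subseteq> (\<Union>j. C j)}"
  moreover assume "Phi \<subseteq> Psi"
  ultimately show "\<exists>C'\<in>{C. E \<subseteq> (\<Union>j. C j)}. (\<Sum>j. pack_zero Phi \<alpha> (C' j)) \<le> (\<Sum>j. pack_zero Psi \<alpha> (C j))"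
    by (intro bexI[of _ C] suminf_le pack_zero_mono) auto
qed

lemma sadic_sub: "2 \<le> s \<Longrightarrow> s_adic_cylinders s \<subseteq> unc_intervals"
  unfolding s_adic_cylinders_def unc_intervals_def
  by (auto intro!: divide_strict_right_mono)

lemma pack_measure_zeroI:
  fixes D :: "nat \<Rightarrow> real set"
  assumes "E \<subseteq> (\<Union>j. D j)" "\<And>j. pack_zero Phi \<alpha> (D j) = 0"
  shows "pack_measure Phi \<alpha> E = 0"
proof -
  have "pack_measure Phi \<alpha> E \<le> (\<Sum>j. pack_zero Phi \<alpha> (D j))"
    unfolding pack_measure_def using assms(1) by (intro INF_lower) auto
  then show ?thesis using assms(2) by simp
qed

lemma pack_zero_eps:
  assumes "\<And>\<delta>. \<delta> > 0 \<Longrightarrow> \<exists>eps>0. pack_eps Phi \<alpha> eps C \<le> ennreal \<delta>"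
  shows "pack_zero Phi \<alpha> C = 0"
proof -
  have *: "pack_zero Phi \<alpha> C \<le> 0 + ennreal e" if e: "e > 0" for e
  proof -
    obtain eps where "eps > 0" "pack_eps Phi \<alpha> eps C \<le> ennreal e" using assms[OF e] by blast
    then show ?thesis unfolding pack_zero_def by (auto intro: INF_lower2)
  qed
  have "pack_zero Phi \<alpha> C \<le> 0"
    by (rule ennreal_le_epsilon) (rule *)
  then show ?thesis by simp
qed



lemma point_zero:
  assumes b: "\<beta> > 0"
  shows "pack_zero unc_intervals \<beta> {q} = 0"
proof (rule pack_zero_eps)
  fix \<delta> :: real assume d: "\<delta> > 0"
  define eps where "eps = \<delta> powr (1/\<beta>)"
  have eps1: "eps > 0" using d unfolding eps_def by simp
  have "eps powr \<beta> = \<delta> powr (1/\<beta> * \<beta>)" unfolding eps_def by (simp add: powr_powr)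
  also have "\<dots> = \<delta>" using b d by simp
  finally have eps: "eps > 0" "eps powr \<beta> = \<delta>" using eps1 by auto
  have "pack_eps unc_intervals \<beta> eps {q} \<le> ennreal \<delta>"
    unfolding pack_eps_def
  proof (rule SUP_least)
    fix F assume "F \<in> {F. is_packing unc_intervals eps {q} F}"
    then have P: "is_packing unc_intervals eps {q} F" by simp
    have mem: "fst p < q \<and> q < snd p \<and> snd p - fst p \<le> eps" if "p \<in> F" for p
      using P that unfolding is_packing_def by (cases p) fastforce
    show "(\<Sum>\<^sub>\<infinity>p\<in>F. ennreal ((snd p - fst p) powr \<beta>)) \<le> ennreal \<delta>"
    proof (cases "F = {}")
      case True then show ?thesis by simp
    next
      case False
      then obtain p0 where p0: "p0 \<in> F" by auto
      have "F = {p0}"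
      proof (rule ccontr)
        assume "F \<noteq> {p0}"
        then obtain p where p: "p \<in> F" "p \<noteq> p0" using p0 by auto
        then have "{fst p<..<snd p} \<inter> {fst p0<..<snd p0} = {}"
          using P p0 unfolding is_packing_def by blast
        moreover have "q \<in> {fst p<..<snd p} \<inter> {fst p0<..<snd p0}" using mem p p0 by auto
        ultimately show False by blast
      qed
      then have "(\<Sum>\<^sub>\<infinity>p\<in>F. ennreal ((snd p - fst p) powr \<beta>)) = ennreal ((snd p0 - fst p0) powr \<beta>)"
        by simp
      also have "\<dots> \<le> ennreal (eps powr \<beta>)"
        using mem[OF p0] b by (intro ennreal_leI powr_mono2) auto
      finally show ?thesis using eps by simp
    qed
  qed
  then show "\<exists>eps>0. pack_eps unc_intervals \<beta> eps {q} \<le> ennreal \<delta>" using eps by blast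
qed

lemma cyl_disj:
  assumes "2 \<le> s" "m \<noteq> m'"
  shows "{real m / real s ^ n<..<(real m + 1) / real s ^ n} \<inter> {real m' / real s ^ n<..<(real m' + 1) / real s ^ n} = {}"
proof -
  have sp: "real s ^ n > 0" using assms by simp
  have *: "(real a + 1) / real s ^ n \<le> real b / real s ^ n" if "a < b" for a b :: nat
    using that sp by (intro divide_right_mono) auto
  show ?thesis
  proof (cases "m < m'")
    case True with *[OF True] show ?thesis by auto
  next
    case False then have "m' < m" using assms by simp
    with *[OF this] show ?thesis by auto
  qed
qed

lemma count_bound:
  assumes s: "2 \<le> s" and fin: "pack_zero (s_adic_cylinders s) \<alpha> C < top"
  shows "\<exists>M n0. M \<ge> 0 \<and> (\<forall>n\<ge>n0. real (card (Nset s C n)) \<le> M * real s powr (\<alpha> * real n))"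
proof -
  obtain eps0 where e0: "eps0 > 0" and fe: "pack_eps (s_adic_cylinders s) \<alpha> eps0 C < top"
    using fin unfolding pack_zero_def INF_less_iff by auto
  define M where "M = enn2real (pack_eps (s_adic_cylinders s) \<alpha> eps0 C)"
  have M: "pack_eps (s_adic_cylinders s) \<alpha> eps0 C = ennreal M" "M \<ge> 0"
    using fe unfolding M_def by (auto simp: less_top)
  have sp: "real s > 0" using s by simp
  obtain N where N: "(1 / real s) ^ N < eps0"
    using real_arch_pow_inv[OF e0, of "1 / real s"] s by auto
  have "real (card (Nset s C n)) \<le> M * real s powr (\<alpha> * real n)" if n: "n \<ge> max 1 N" for n
  proof -
    define f where "f = (\<lambda>m::nat. (real m / real s ^ n, (real m + 1) / real s ^ n))"
    define F where "F = f ` Nset s C n"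
    have len: "snd (f m) - fst (f m) = 1 / real s ^ n" for m
      unfolding f_def by (simp add: diff_divide_distrib[symmetric])
    have inj: "inj_on f (Nset s C n)" unfolding f_def inj_on_def using sp by auto
    have hle: "1 / real s ^ n \<le> eps0"
    proof -
      have "1 / real s ^ n = (1 / real s) ^ n" by (simp add: power_one_over)
      also have "\<dots> \<le> (1 / real s) ^ N" using n s by (intro power_decreasing) auto
      finally show ?thesis using N by simp
    qed
    have P: "is_packing (s_adic_cylinders s) eps0 C F"
      unfolding is_packing_def
    proof (intro conjI ballI)
      show "countable F" unfolding F_def using finite_Nset by (simp add: countable_finite)
      show "F \<subseteq> s_adic_cylinders s" unfolding F_def f_def s_adic_cylinders_def Nset_def
        using n by auto
    next
      fix p assume "p \<in> F"
      then obtain m where m: "m \<in> Nset s C n" "p = f m" unfolding F_def by auto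
      show "case p of (a, b) \<Rightarrow> a < b \<and> b - a \<le> eps0 \<and> {a<..<b} \<inter> C \<noteq> {}"
        using m len[of m] hle sp unfolding Nset_def f_def by (auto simp: divide_strict_right_mono)
    next
      fix p q assume "p \<in> F" "q \<in> F"
      then show "p \<noteq> q \<longrightarrow> {fst p<..<snd p} \<inter> {fst q<..<snd q} = {}"
        unfolding F_def f_def using cyl_disj[OF s] by auto
    qed
    have "(\<Sum>\<^sub>\<infinity>p\<in>F. ennreal ((snd p - fst p) powr \<alpha>)) \<le> pack_eps (s_adic_cylinders s) \<alpha> eps0 C"
      unfolding pack_eps_def using P by (intro SUP_upper) auto
    moreover have "(\<Sum>\<^sub>\<infinity>p\<in>F. ennreal ((snd p - fst p) powr \<alpha>))
        = ennreal (real (card (Nset s C n)) * (1 / real s ^ n) powr \<alpha>)"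
    proof -
      have "(\<Sum>\<^sub>\<infinity>p\<in>F. ennreal ((snd p - fst p) powr \<alpha>)) = (\<Sum>p\<in>F. ennreal ((snd p - fst p) powr \<alpha>))"
        unfolding F_def using finite_Nset by simp
      also have "\<dots> = (\<Sum>m\<in>Nset s C n. ennreal ((1 / real s ^ n) powr \<alpha>))"
        unfolding F_def by (simp add: sum.reindex[OF inj] len)
      finally show ?thesis by (simp add: ennreal_of_nat_eq_real_of_nat ennreal_mult)
    qed
    ultimately have le: "real (card (Nset s C n)) * (1 / real s ^ n) powr \<alpha> \<le> M"
      using M by (auto simp: ennreal_le_iff2)
    have eq: "(1 / real s ^ n) powr \<alpha> = 1 / real s powr (\<alpha> * real n)"
      using sp by (simp add: powr_divide powr_realpow[symmetric] powr_powr mult.commute)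
    have pos: "real s powr (\<alpha> * real n) > 0" using sp by simp
    from le show ?thesis unfolding eq using pos by (simp add: field_simps)
  qed
  then show ?thesis using M by blast
qed



lemma geo_bound:
  fixes r :: real
  assumes r: "0 \<le> r" "r < 1" and S: "finite S" "\<forall>n\<in>S. n1 \<le> n"
  shows "(\<Sum>n\<in>S. r ^ n) \<le> r ^ n1 / (1 - r)"
proof -
  define N where "N = Max (insert n1 S)"
  have N: "n1 \<le> N" "S \<subseteq> {n1..N}" using S unfolding N_def by auto
  have "(\<Sum>n\<in>S. r ^ n) \<le> (\<Sum>n\<in>{n1..N}. r ^ n)"
    using N r by (intro sum_mono2) auto
  also have "\<dots> = (r ^ n1 - r ^ Suc N) / (1 - r)"
    using N r by (simp add: sum_gp)
  also have "\<dots> \<le> r ^ n1 / (1 - r)"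
    using r by (intro divide_right_mono) auto
  finally show ?thesis .
qed

lemma level_exists:
  assumes s: "2 \<le> s" and l: "0 < l" "l \<le> (1 / real s) ^ n1"
  shows "\<exists>n\<ge>n1. (1 / real s) ^ Suc n < l \<and> l \<le> (1 / real s) ^ n"
proof -
  have q: "0 < 1 / real s" "1 / real s < 1" using s by auto
  obtain N where N: "(1 / real s) ^ N < l" using real_arch_pow_inv[OF l(1) q(2)] by auto
  have ex: "\<exists>n. (1 / real s) ^ Suc n < l"
    using N q by (intro exI[of _ N]) (meson le_less_trans less_imp_le power_Suc_less_one power_decreasing le_SucI order_refl)
  define n where "n = (LEAST n. (1 / real s) ^ Suc n < l)"
  have n1: "(1 / real s) ^ Suc n < l" unfolding n_def using LeastI_ex[OF ex] .
  have n2: "l \<le> (1 / real s) ^ n"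
  proof (cases n)
    case 0 then show ?thesis using l q by (metis order_trans power_0 power_le_one less_imp_le)
  next
    case (Suc n')
    then have "\<not> (1 / real s) ^ Suc n' < l" using not_less_Least[of n' "\<lambda>n. (1 / real s) ^ Suc n < l"]
      unfolding n_def by (metis lessI n_def)
    then show ?thesis using Suc by simp
  qed
  have "n1 \<le> n"
  proof (rule ccontr)
    assume "\<not> n1 \<le> n"
    then have "(1 / real s) ^ n1 \<le> (1 / real s) ^ Suc n" using q by (intro power_decreasing) auto
    then show False using n1 l by simp
  qed
  then show ?thesis using n1 n2 by blast
qed



lemma core_fin:
  assumes s: "2 \<le> s" and C: "C \<subseteq> {0<..<1} - Qs s" and a: "0 \<le> \<alpha>" "\<alpha> < \<beta>" and M: "M \<ge> 0"
    and cnt: "\<And>n. n \<ge> n0 \<Longrightarrow> real (card (Nset s C n)) \<le> M * real s powr (\<alpha> * real n)"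
    and n1: "n1 \<ge> n0" and P: "is_packing unc_intervals ((1 / real s) ^ n1) C F"
    and G: "finite G" "G \<subseteq> F"
  shows "(\<Sum>p\<in>G. (snd p - fst p) powr \<beta>) \<le> 2 * M * real s powr \<alpha> * (real s powr (\<alpha> - \<beta>)) ^ n1 / (1 - real s powr (\<alpha> - \<beta>))"
proof -
  define q where "q = 1 / real s"
  define r where "r = real s powr (\<alpha> - \<beta>)"
  have sp: "real s > 1" using s by simp
  have r: "0 < r" "r < 1" unfolding r_def using sp a by (auto intro: powr_less_one)
  have qp: "q ^ n = 1 / real s ^ n" for n unfolding q_def by (simp add: power_one_over)
  have Pi: "fst p < snd p \<and> snd p - fst p \<le> q ^ n1 \<and> (\<exists>x. fst p < x \<and> x < snd p \<and> x \<in> C)" if "p \<in> F" for p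
    using P that unfolding is_packing_def q_def by (cases p) fastforce
  have Pd: "{fst p<..<snd p} \<inter> {fst p'<..<snd p'} = {}" if "p \<in> F" "p' \<in> F" "p \<noteq> p'" for p p'
    using P that unfolding is_packing_def by blast
  have "\<forall>p\<in>F. \<exists>n\<ge>n1. q ^ Suc n < snd p - fst p \<and> snd p - fst p \<le> q ^ n"
    using Pi level_exists[OF s] unfolding q_def by simp
  then obtain k where k: "\<And>p. p \<in> F \<Longrightarrow> k p \<ge> n1 \<and> q ^ Suc (k p) < snd p - fst p \<and> snd p - fst p \<le> q ^ k p"
    by metis
  have "\<forall>p\<in>F. \<exists>x. fst p < x \<and> x < snd p \<and> x \<in> C" using Pi by blast
  then obtain x where x: "\<And>p. p \<in> F \<Longrightarrow> fst p < x p \<and> x p < snd p \<and> x p \<in> C" by metis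
  define m where "m p = nat \<lfloor>x p * real s ^ Suc (k p)\<rfloor>" for p
  have mp: "m p \<in> Nset s C (Suc (k p)) \<and> real (m p) / real s ^ Suc (k p) < x p \<and> x p < (real (m p) + 1) / real s ^ Suc (k p)"
    if "p \<in> F" for p
  proof -
    have xc: "x p \<in> C" "0 < x p" "x p < 1" "x p \<notin> Qs s" using x[OF that] C by auto
    note cy = cyl[OF s xc(2,3,4), of "Suc (k p)"]
    show ?thesis using cy xc unfolding m_def Nset_def by auto
  qed
  have cardb: "card {p\<in>G. k p = n} \<le> 2 * card (Nset s C (Suc n))" for n
  proof -
    define g where "g p = (m p, fst p < real (m p) / real s ^ Suc n)" for p
    have inj: "inj_on g {p\<in>G. k p = n}"
    proof (rule inj_onI, rule ccontr)
      fix p p' assume p: "p \<in> {p\<in>G. k p = n}" and p': "p' \<in> {p\<in>G. k p = n}" and eq: "g p = g p'" and ne: "p \<noteq> p'"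
      define u where "u = real (m p) / real s ^ Suc n"
      define w where "w = (real (m p) + 1) / real s ^ Suc n"
      have wu: "w - u = q ^ Suc n" unfolding u_def w_def qp by (simp add: diff_divide_distrib[symmetric])
      have cl: "(fst p'' < u \<longrightarrow> u \<in> {fst p''<..<snd p''}) \<and> (\<not> fst p'' < u \<longrightarrow> w \<in> {fst p''<..<snd p''})"
        if "p'' \<in> F" "k p'' = n" "m p'' = m p" for p''
      proof -
        have "u < x p''" "x p'' < w" using mp[OF that(1)] that(2,3) unfolding u_def w_def by auto
        moreover have "fst p'' < x p''" "x p'' < snd p''" using x[OF that(1)] by auto
        moreover have "q ^ Suc n < snd p'' - fst p''" using k[OF that(1)] that(2) by auto
        ultimately show ?thesis using wu by auto
      qed
      have pF: "p \<in> F" "p' \<in> F" using p p' G by auto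
      have mm: "m p' = m p" and sd: "(fst p < u) = (fst p' < u)" using eq unfolding g_def u_def by auto
      have c1: "(fst p < u \<longrightarrow> u \<in> {fst p<..<snd p}) \<and> (\<not> fst p < u \<longrightarrow> w \<in> {fst p<..<snd p})"
        using cl[OF pF(1)] p by auto
      have c2: "(fst p' < u \<longrightarrow> u \<in> {fst p'<..<snd p'}) \<and> (\<not> fst p' < u \<longrightarrow> w \<in> {fst p'<..<snd p'})"
        using cl[OF pF(2)] p' mm by auto
      show False using c1 c2 sd Pd[OF pF ne] by blast
    qed
    have sub: "g ` {p\<in>G. k p = n} \<subseteq> Nset s C (Suc n) \<times> UNIV"
      unfolding g_def using mp G by auto
    have "card {p\<in>G. k p = n} = card (g ` {p\<in>G. k p = n})" using card_image[OF inj] by simp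
    also have "\<dots> \<le> card (Nset s C (Suc n) \<times> (UNIV :: bool set))"
      using sub finite_Nset by (intro card_mono) auto
    also have "\<dots> = 2 * card (Nset s C (Suc n))" by (simp add: card_cartesian_product)
    finally show ?thesis .
  qed
  have key: "2 * (M * real s powr (\<alpha> * real (Suc n))) * (q ^ n) powr \<beta> = (2 * M * real s powr \<alpha>) * r ^ n" for n
  proof -
    have "q ^ n = real s powr (- real n)" unfolding qp using sp by (simp add: powr_minus powr_realpow divide_inverse)
    then have A: "(q ^ n) powr \<beta> = real s powr (- real n * \<beta>)" by (simp add: powr_powr)
    have B: "r ^ n = real s powr ((\<alpha> - \<beta>) * real n)" unfolding r_def using sp
      by (simp add: powr_realpow[symmetric] powr_powr)
    have e: "- real n * \<beta> + \<alpha> * real (Suc n) = \<alpha> + (\<alpha> - \<beta>) * real n" by (simp add: algebra_simps)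
    have Cc: "real s powr (- real n * \<beta>) * real s powr (\<alpha> * real (Suc n)) = real s powr \<alpha> * real s powr ((\<alpha> - \<beta>) * real n)"
      by (simp only: powr_add[symmetric] e)
    show ?thesis unfolding A B using Cc by (simp only: mult_ac)
  qed
  have "(\<Sum>p\<in>G. (snd p - fst p) powr \<beta>) \<le> (\<Sum>p\<in>G. (q ^ k p) powr \<beta>)"
  proof (rule sum_mono)
    fix p assume "p \<in> G"
    then have "p \<in> F" using G by auto
    then have "0 \<le> snd p - fst p" "snd p - fst p \<le> q ^ k p" using k[of p] Pi[of p] by auto
    then show "(snd p - fst p) powr \<beta> \<le> (q ^ k p) powr \<beta>" using a by (intro powr_mono2) auto
  qed
  also have "\<dots> = (\<Sum>n\<in>k ` G. (\<Sum>p\<in>{p\<in>G. k p = n}. (q ^ k p) powr \<beta>))"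
    using G(1) by (rule sum.image_gen)
  also have "\<dots> = (\<Sum>n\<in>k ` G. real (card {p\<in>G. k p = n}) * (q ^ n) powr \<beta>)"
    by (intro sum.cong) auto
  also have "\<dots> \<le> (\<Sum>n\<in>k ` G. 2 * (M * real s powr (\<alpha> * real (Suc n))) * (q ^ n) powr \<beta>)"
  proof (rule sum_mono)
    fix n assume "n \<in> k ` G"
    then obtain p where "p \<in> G" "n = k p" by auto
    then have "n \<ge> n0" using k[of p] G n1 by auto
    then have cn: "real (card (Nset s C (Suc n))) \<le> M * real s powr (\<alpha> * real (Suc n))"
      using cnt[of "Suc n"] by simp
    have "real (card {p\<in>G. k p = n}) \<le> real (2 * card (Nset s C (Suc n)))"
      using cardb[of n] by (simp only: of_nat_le_iff)
    also have "\<dots> = 2 * real (card (Nset s C (Suc n)))" by simp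
    also have "\<dots> \<le> 2 * (M * real s powr (\<alpha> * real (Suc n)))" using cn by simp
    finally have "real (card {p\<in>G. k p = n}) \<le> 2 * (M * real s powr (\<alpha> * real (Suc n)))" .
    then show "real (card {p\<in>G. k p = n}) * (q ^ n) powr \<beta> \<le> 2 * (M * real s powr (\<alpha> * real (Suc n))) * (q ^ n) powr \<beta>"
      by (intro mult_right_mono) auto
  qed
  also have "\<dots> = (2 * M * real s powr \<alpha>) * (\<Sum>n\<in>k ` G. r ^ n)"
    unfolding sum_distrib_left by (intro sum.cong refl key)
  also have "\<dots> \<le> (2 * M * real s powr \<alpha>) * (r ^ n1 / (1 - r))"
  proof (rule mult_left_mono)
    show "(\<Sum>n\<in>k ` G. r ^ n) \<le> r ^ n1 / (1 - r)"
    proof (rule geo_bound)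
      show "0 \<le> r" "r < 1" using r by auto
      show "finite (k ` G)" using G(1) by simp
      show "\<forall>n\<in>k ` G. n1 \<le> n" using k G(2) by blast
    qed
    show "0 \<le> 2 * M * real s powr \<alpha>" using M by simp
  qed
  finally have X: "(\<Sum>p\<in>G. (snd p - fst p) powr \<beta>) \<le> 2 * M * real s powr \<alpha> * (r ^ n1 / (1 - r))" .
  then show ?thesis by (simp only: r_def times_divide_eq_right)
qed



lemma core:
  assumes s: "2 \<le> s" and C: "C \<subseteq> {0<..<1} - Qs s" and a: "0 \<le> \<alpha>" "\<alpha> < \<beta>" and M: "M \<ge> 0"
    and cnt: "\<And>n. n \<ge> n0 \<Longrightarrow> real (card (Nset s C n)) \<le> M * real s powr (\<alpha> * real n)"
  shows "pack_zero unc_intervals \<beta> C = 0"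
proof (rule pack_zero_eps)
  fix \<delta> :: real assume d: "\<delta> > 0"
  define r where "r = real s powr (\<alpha> - \<beta>)"
  define K where "K = 2 * M * real s powr \<alpha> / (1 - r)"
  have sp: "real s > 1" using s by simp
  have r: "0 < r" "r < 1" unfolding r_def using sp a by (auto intro: powr_less_one)
  have K: "K \<ge> 0" unfolding K_def using r M by simp
  obtain N where N: "r ^ N < \<delta> / (K + 1)" using real_arch_pow_inv[of "\<delta> / (K + 1)" r] d K r by auto
  define n1 where "n1 = max n0 N"
  have rn: "r ^ n1 \<le> r ^ N" unfolding n1_def using r by (intro power_decreasing) auto
  have bound: "K * r ^ n1 \<le> \<delta>"
  proof -
    have "K * r ^ n1 \<le> K * (\<delta> / (K + 1))" using rn N K by (intro mult_left_mono) auto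
    also have "\<dots> \<le> \<delta>" using K d by (simp add: field_simps)
    finally show ?thesis .
  qed
  define eps where "eps = (1 / real s) ^ n1"
  have "pack_eps unc_intervals \<beta> eps C \<le> ennreal \<delta>"
    unfolding pack_eps_def
  proof (rule SUP_least)
    fix F assume "F \<in> {F. is_packing unc_intervals eps C F}"
    then have P: "is_packing unc_intervals ((1 / real s) ^ n1) C F" unfolding eps_def by simp
    show "(\<Sum>\<^sub>\<infinity>p\<in>F. ennreal ((snd p - fst p) powr \<beta>)) \<le> ennreal \<delta>"
    proof (rule infsum_le_finite_sums)
      show "(\<lambda>p. ennreal ((snd p - fst p) powr \<beta>)) summable_on F"
        by (rule nonneg_summable_on_complete) simp
    next
      fix G assume G: "finite G" "G \<subseteq> F"
      have "(\<Sum>p\<in>G. (snd p - fst p) powr \<beta>) \<le> 2 * M * real s powr \<alpha> * r ^ n1 / (1 - r)"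
        using core_fin[OF s C a M cnt _ P G] unfolding n1_def r_def by simp
      also have "\<dots> = K * r ^ n1" unfolding K_def by simp
      finally have "(\<Sum>p\<in>G. (snd p - fst p) powr \<beta>) \<le> \<delta>" using bound by simp
      then show "(\<Sum>p\<in>G. ennreal ((snd p - fst p) powr \<beta>)) \<le> ennreal \<delta>"
        by (simp add: ennreal_leI)
    qed
  qed
  moreover have "eps > 0" unfolding eps_def using sp by simp
  ultimately show "\<exists>eps>0. pack_eps unc_intervals \<beta> eps C \<le> ennreal \<delta>" by blast
qed

lemma cover_zero:
  fixes C :: "nat \<Rightarrow> real set"
  assumes s: "2 \<le> s" and b: "\<beta> > 0" and E: "E \<subseteq> {0..1}" and cov: "E \<subseteq> (\<Union>j. C j)"
    and z: "\<And>j. pack_zero unc_intervals \<beta> (C j \<inter> {0<..<1} - Qs s) = 0"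
  shows "pack_measure unc_intervals \<beta> E = 0"
proof -
  have Qne: "Qs s \<noteq> {}" using Qs_I[of 0 s 0] by auto
  define g where "g = from_nat_into (Qs s)"
  have rg: "range g = Qs s" unfolding g_def using Qne countable_Qs by simp
  define D where "D j = (if even j then C (j div 2) \<inter> {0<..<1} - Qs s else {g (j div 2)})" for j
  show ?thesis
  proof (rule pack_measure_zeroI)
    show "E \<subseteq> (\<Union>j. D j)"
    proof
      fix x assume xE: "x \<in> E"
      show "x \<in> (\<Union>j. D j)"
      proof (cases "x \<in> Qs s")
        case True
        then obtain i where "x = g i" using rg by (metis imageE)
        then have "x \<in> D (2 * i + 1)" unfolding D_def by simp
        then show ?thesis by blast
      next
        case False
        have "x \<noteq> 0" "x \<noteq> 1" using False Qs_I[of 0 s 0] Qs_I[of 1 s 0] by auto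
        then have x01: "x \<in> {0<..<1}" using xE E by auto
        obtain i where "x \<in> C i" using xE cov by blast
        then have "x \<in> D (2 * i)" unfolding D_def using x01 False by simp
        then show ?thesis by blast
      qed
    qed
  next
    fix j show "pack_zero unc_intervals \<beta> (D j) = 0"
      unfolding D_def using z point_zero[OF b] by simp
  qed
qed



theorem corollary4:
  fixes s :: nat and E :: "real set"
  assumes "2 \<le> s" and "E \<subseteq> {0..1}"
  shows "pack_dim (s_adic_cylinders s) E = dim_P_unc E"
proof -
  note s = assms(1) and E = assms(2)
  define SF where "SF = {\<alpha>. 0 \<le> \<alpha> \<and> pack_measure (s_adic_cylinders s) \<alpha> E = 0}"
  define SU where "SU = {\<alpha>. 0 \<le> \<alpha> \<and> pack_measure unc_intervals \<alpha> E = 0}"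
  have sp: "real s > 0" using s by simp
  have "pack_measure unc_intervals 2 E = 0"
  proof (rule cover_zero[OF s _ E, where C="\<lambda>_. UNIV"])
    fix j
    show "pack_zero unc_intervals 2 (UNIV \<inter> {0<..<1} - Qs s) = 0"
    proof (rule core[where \<alpha>=1 and M=1, OF s])
      fix n :: nat
      have "real (card (Nset s (UNIV \<inter> {0<..<1} - Qs s) n)) \<le> real (s ^ n)"
        using card_Nset by (simp only: of_nat_le_iff)
      also have "\<dots> = 1 * real s powr (1 * real n)" using sp by (simp add: powr_realpow)
      finally show "real (card (Nset s (UNIV \<inter> {0<..<1} - Qs s) n)) \<le> 1 * real s powr (1 * real n)" .
    qed auto
  qed auto
  then have U2: "2 \<in> SU" unfolding SU_def by simp
  have sub: "SU \<subseteq> SF"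
  proof
    fix \<alpha> assume "\<alpha> \<in> SU"
    then have "0 \<le> \<alpha>" "pack_measure unc_intervals \<alpha> E = 0" unfolding SU_def by auto
    moreover have "pack_measure (s_adic_cylinders s) \<alpha> E \<le> pack_measure unc_intervals \<alpha> E"
      by (rule pack_measure_mono[OF sadic_sub[OF s]])
    ultimately show "\<alpha> \<in> SF" unfolding SF_def by simp
  qed
  have bF: "bdd_below SF" unfolding SF_def by (rule bdd_belowI[of _ 0]) auto
  have bU: "bdd_below SU" unfolding SU_def by (rule bdd_belowI[of _ 0]) auto
  have le1: "Inf SF \<le> Inf SU" using U2 bF sub by (intro cInf_superset_mono) auto
  have le2: "Inf SU \<le> Inf SF"
  proof (rule dense_ge)
    fix \<beta> assume "Inf SF < \<beta>"
    then obtain \<alpha> where a: "\<alpha> \<in> SF" "\<alpha> < \<beta>" using cInf_lessD[of SF] U2 sub by blast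
    then have a0: "0 \<le> \<alpha>" and pm: "pack_measure (s_adic_cylinders s) \<alpha> E < 1" unfolding SF_def by auto
    then obtain C :: "nat \<Rightarrow> real set" where cov: "E \<subseteq> (\<Union>j. C j)"
        and sm: "(\<Sum>j. pack_zero (s_adic_cylinders s) \<alpha> (C j)) < 1"
      unfolding pack_measure_def INF_less_iff by auto
    have "pack_measure unc_intervals \<beta> E = 0"
    proof (rule cover_zero[OF s _ E cov])
      show "0 < \<beta>" using a a0 by simp
    next
      fix j
      define C' where "C' = C j \<inter> {0<..<1} - Qs s"
      have "pack_zero (s_adic_cylinders s) \<alpha> C' \<le> pack_zero (s_adic_cylinders s) \<alpha> (C j)"
        unfolding C'_def by (rule pack_zero_mono) auto
      also have "\<dots> < 1" using ennreal_suminf_lessD[OF sm] .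
      also have "(1::ennreal) < top" by simp
      finally obtain M n0 where M: "M \<ge> 0" and cnt: "\<forall>n\<ge>n0. real (card (Nset s C' n)) \<le> M * real s powr (\<alpha> * real n)"
        using count_bound[OF s] by blast
      show "pack_zero unc_intervals \<beta> (C j \<inter> {0<..<1} - Qs s) = 0"
        unfolding C'_def[symmetric]
        by (rule core[OF s _ a0 a(2) M]) (use cnt C'_def in auto)
    qed
    then have "\<beta> \<in> SU" unfolding SU_def using a a0 by simp
    then show "Inf SU \<le> \<beta>" using bU by (rule cInf_lower)
  qed
  show ?thesis unfolding pack_dim_def dim_P_unc_def
    using le1 le2 unfolding SF_def SU_def by simp
qed

end
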